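(* Let $U\ge 1$, $n\ge1$ and $k\ge Un$ be integers. For each user $j=1,\dots,U$ let $\mathbf{L}_j\subseteq M_{n\times k}(\mathbb{C})$ be a lattice of full rank $r=2kn$ (as a lattice in the real vector space $M_{n\times k}(\mathbb{C})\cong\mathbb{R}^{2kn}$) with $\mathbb{Z}$-basis $B_{j,1},\dots,B_{j,r}$, and for a positive integer $N_j$ put $$\mathbf{L}_j(N_j)=\Big\{\sum_{i=1}^r b_iB_{j,i}\;:\; b_i\in\mathbb{Z},\ -N_j\le b_i\le N_j\Big\}.$$ Define $$\mathfrak{D}(N_1,\dots,N_U)=\min_{X_j\in\mathbf{L}_j(N_j)\setminus\{0\},\ j=1,\dots,U}\det(MM^{\dagger}),$$ where $M=M(X_1,\dots,X_U)$ is the $Un\times k$ matrix obtained by stacking $X_1,\dots,X_U$ vertically (rows of $X_1$ first, then those of $X_2$, etc.), and write $\mathfrak{D}(N)=\mathfrak{D}(N,\dots,N)$. Then there is a constant $K>0$, depending on the lattices $\mathbf{L}_1,\dots,\mathbf{L}_U$ (and on $n,k,U$) but not on $N_1,\dots,N_U$, such that for all positive integers $N_1,\dots,N_U$, $$\mathfrak{D}(N_1,\dots,N_U)\le K\prod_{l=1}^{U-1}N_l^{-\frac{2n^2(U-l)}{k-n(U-l)}},$$ and in particular $\mathfrak{D}(N)\le K/N^{\alpha}$ with $\alpha=\sum_{l=1}^{U-1}\frac{2n^2(U-l)}{k-n(U-l)}$. In the special case $k=Un$ this reads $$\mathfrak{D}(N_1,\dots,N_U)\le K\prod_{l=1}^{U-1}N_l^{-\frac{2n(U-l)}{l}},\qquad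 \mathfrak{D}(N)\le \frac{K}{N^{\beta}},\quad \beta=\sum_{l=1}^{U-1}\frac{2n(U-l)}{l}.$$
   Context: $M_{n\times k}(\mathbb{C})$ is the space of complex $n\times k$ matrices, regarded as a real vector space of dimension $2nk$. For a complex matrix $X$, $X^{\dagger}$ denotes its conjugate transpose. The tuple $(\mathbf{L}_1(N_1),\dots,\mathbf{L}_U(N_U))$ is called a $U$-user MIMO-MAC lattice code and $\mathfrak{D}$ its decay function. *)

theory Defs
  imports Complex_Main "Jordan_Normal_Form.Determinant"
begin

definition ctrans :: "complex mat \<Rightarrow> complex mat" where
  "ctrans A = mat (dim_col A) (dim_row A) (\<lambda>(i,j). cnj (A $$ (j,i)))"

definition lat_comb :: "nat \<Rightarrow> nat \<Rightarrow> nat \<Rightarrow> (nat \<Rightarrow> complex mat) \<Rightarrow> (nat \<Rightarrow> int) \<Rightarrow> complex mat" where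
  "lat_comb n k r B b = mat n k (\<lambda>(a,c). \<Sum>i\<in>{1..r}. of_int (b i) * (B i $$ (a,c)))"

(* B_1,...,B_r is a basis of M_{n x k}(C) as a real vector space (r = 2kn),
   i.e. it spans a full-rank lattice *)
definition full_rank_lattice_basis :: "nat \<Rightarrow> nat \<Rightarrow> (nat \<Rightarrow> complex mat) \<Rightarrow> bool" where
  "full_rank_lattice_basis n k B \<longleftrightarrow>
     (\<forall>i\<in>{1..2*k*n}. B i \<in> carrier_mat n k) \<and>
     (\<forall>c :: nat \<Rightarrow> real.
        mat n k (\<lambda>(a,d). \<Sum>i\<in>{1..2*k*n}. of_real (c i) * (B i $$ (a,d))) = 0\<^sub>m n k
        \<longrightarrow> (\<forall>i\<in>{1..2*k*n}. c i = 0))"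

definition trunc_lattice :: "nat \<Rightarrow> nat \<Rightarrow> (nat \<Rightarrow> complex mat) \<Rightarrow> nat \<Rightarrow> complex mat set" where
  "trunc_lattice n k B N =
     {lat_comb n k (2*k*n) B b | b. \<forall>i\<in>{1..2*k*n}. - int N \<le> b i \<and> b i \<le> int N}"

definition stack :: "nat \<Rightarrow> nat \<Rightarrow> nat \<Rightarrow> (nat \<Rightarrow> complex mat) \<Rightarrow> complex mat" where
  "stack U n k X = mat (U*n) k (\<lambda>(a,c). X (a div n + 1) $$ (a mod n, c))"

(* decay function: users j = 1..U, lattice bases B j, truncation parameters N j.
   det(M M^dagger) is real (M M^dagger is Hermitian), so we take its real part. *)
definition decay :: "nat \<Rightarrow> nat \<Rightarrow> nat \<Rightarrow> (nat \<Rightarrow> nat \<Rightarrow> complex mat) \<Rightarrow> (nat \<Rightarrow> nat) \<Rightarrow> real" where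
  "decay U n k B N = Min {Re (det (stack U n k X * ctrans (stack U n k X))) | X.
      \<forall>j\<in>{1..U}. X j \<in> trunc_lattice n k (B j) (N j) - {0\<^sub>m n k}}"

end

theory Submission
  imports Defs
begin


definition ip :: "nat \<Rightarrow> (nat \<Rightarrow> complex) \<Rightarrow> (nat \<Rightarrow> complex) \<Rightarrow> complex" where
  "ip k x y = (\<Sum>c<k. x c * cnj (y c))"

definition nrm2 :: "nat \<Rightarrow> (nat \<Rightarrow> complex) \<Rightarrow> real" where
  "nrm2 k x = (\<Sum>c<k. (cmod (x c))^2)"

definition coef :: "nat \<Rightarrow> (nat \<Rightarrow> complex) \<Rightarrow> (nat \<Rightarrow> complex) \<Rightarrow> complex" where
  "coef k r q = (if nrm2 k q = 0 then 0 else ip k r q / of_real (nrm2 k q))"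

fun gs :: "nat \<Rightarrow> (nat \<Rightarrow> complex) list \<Rightarrow> (nat \<Rightarrow> complex) list" where
  "gs k [] = []"
| "gs k (r # rs) = (let qs = gs k rs in
     (\<lambda>c. r c - (\<Sum>j<length qs. coef k r (qs!j) * (qs!j) c)) # qs)"

definition vk :: "nat \<Rightarrow> (nat \<Rightarrow> complex) \<Rightarrow> bool" where
  "vk k x \<longleftrightarrow> (\<forall>c\<ge>k. x c = 0)"

lemma ip_self: "ip k x x = of_real (nrm2 k x)"
  unfolding ip_def nrm2_def of_real_sum by (rule sum.cong) (simp_all add: complex_norm_square[symmetric])

lemma nrm2_nonneg: "nrm2 k x \<ge> 0"
  unfolding nrm2_def by (simp add: sum_nonneg)

lemma ip_cnj: "ip k y x = cnj (ip k x y)"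
  unfolding ip_def by (simp add: mult.commute)

lemma nrm2_zero: "nrm2 k x = 0 \<Longrightarrow> c < k \<Longrightarrow> x c = 0"
  unfolding nrm2_def
  by (subst (asm) sum_nonneg_eq_0_iff) auto

lemma ip_zero_right: "nrm2 k y = 0 \<Longrightarrow> ip k x y = 0"
  unfolding ip_def by (auto intro!: sum.neutral simp: nrm2_zero)

lemma ip_zero_left: "nrm2 k y = 0 \<Longrightarrow> ip k y x = 0"
  unfolding ip_def by (auto intro!: sum.neutral simp: nrm2_zero)



lemma ip_lin_left: "ip k (\<lambda>c. \<Sum>j\<in>A. a j * u j c) y = (\<Sum>j\<in>A. a j * ip k (u j) y)"
  unfolding ip_def sum_distrib_right sum_distrib_left
  by (subst sum.swap) (simp add: mult.assoc)

lemma ip_lin_right: "ip k y (\<lambda>c. \<Sum>j\<in>A. a j * u j c) = (\<Sum>j\<in>A. cnj (a j) * ip k y (u j))"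
  unfolding ip_def sum_distrib_right sum_distrib_left cnj_sum
  by (subst sum.swap) (simp add: algebra_simps)

lemma ip_diff_left: "ip k (\<lambda>c. x c - z c) y = ip k x y - ip k z y"
  unfolding ip_def by (simp add: algebra_simps sum_subtractf)

lemma ip_add_left: "ip k (\<lambda>c. x c + z c) y = ip k x y + ip k z y"
  unfolding ip_def by (simp add: algebra_simps sum.distrib)

lemma ip_diff_right: "ip k y (\<lambda>c. x c - z c) = ip k y x - ip k y z"
  unfolding ip_def by (simp add: algebra_simps sum_subtractf)

lemma ip_add_right: "ip k y (\<lambda>c. x c + z c) = ip k y x + ip k y z"
  unfolding ip_def by (simp add: algebra_simps sum.distrib)

lemma ip_cong: "(\<And>c. c < k \<Longrightarrow> x c = x' c) \<Longrightarrow> (\<And>c. c < k \<Longrightarrow> y c = y' c) \<Longrightarrow> ip k x y = ip k x' y'"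
  unfolding ip_def by (auto intro!: sum.cong)

lemma gs_length[simp]: "length (gs k rs) = length rs"
  by (induction rs) (auto simp: Let_def)

lemma gs_drop: "drop p (gs k rs) = gs k (drop p rs)"
proof (induction rs arbitrary: p)
  case Nil then show ?case by simp
next
  case (Cons r rs) then show ?case by (cases p) (auto simp: Let_def)
qed

lemma gs_nth_drop: "p + i < length rs \<Longrightarrow> gs k rs ! (p + i) = gs k (drop p rs) ! i"
proof -
  assume "p + i < length rs"
  then have "drop p (gs k rs) ! i = gs k rs ! (p + i)" by (simp add: nth_drop)
  then show ?thesis by (simp add: gs_drop)
qed



lemma sum_shift_gt: "(\<Sum>j<m - Suc i. f (Suc i + j)) = (\<Sum>j\<in>{i<..<m}. (f j :: 'a::comm_monoid_add))"
proof (cases "Suc i \<le> m")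
  case True
  have "(\<Sum>j<m - Suc i. f (Suc i + j)) = (\<Sum>j\<in>{0..<m - Suc i}. f (j + Suc i))"
    by (simp add: lessThan_atLeast0 add.commute)
  also have "\<dots> = sum f {0 + Suc i..<(m - Suc i) + Suc i}"
    by (rule sum.shift_bounds_nat_ivl[symmetric])
  also have "{0 + Suc i..<(m - Suc i) + Suc i} = {i<..<m}" using True by auto
  finally show ?thesis .
next
  case False then show ?thesis by auto
qed

lemma gs_nth: "i < length rs \<Longrightarrow> gs k rs ! i =
   (\<lambda>c. (rs!i) c - (\<Sum>j\<in>{i<..<length rs}. coef k (rs!i) (gs k rs ! j) * (gs k rs ! j) c))"
proof -
  assume i: "i < length rs"
  have d: "drop i rs = rs!i # drop (Suc i) rs" using i by (simp add: Cons_nth_drop_Suc)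
  have "gs k rs ! i = gs k (drop i rs) ! 0" using gs_nth_drop[of i 0 rs k] i by simp
  also have "\<dots> = (\<lambda>c. (rs!i) c - (\<Sum>j<length rs - Suc i. coef k (rs!i) (gs k rs ! (Suc i + j)) * (gs k rs ! (Suc i + j)) c))"
    unfolding d using gs_nth_drop[of "Suc i" _ rs k] by (auto simp: Let_def intro!: sum.cong)
  also have "\<dots> = (\<lambda>c. (rs!i) c - (\<Sum>j\<in>{i<..<length rs}. coef k (rs!i) (gs k rs ! j) * (gs k rs ! j) c))"
    by (subst sum_shift_gt[where f = "\<lambda>j. coef k (rs!i) (gs k rs ! j) * (gs k rs ! j) _"]) (rule refl)
  finally show ?thesis .
qed

lemma vk_gs: "(\<forall>x\<in>set rs. vk k x) \<Longrightarrow> \<forall>q\<in>set (gs k rs). vk k q"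
proof (induction rs)
  case Nil then show ?case by simp
next
  case (Cons r rs)
  then have h: "\<forall>q\<in>set (gs k rs). vk k q" by simp
  have "vk k (\<lambda>c. r c - (\<Sum>j<length (gs k rs). coef k r (gs k rs!j) * (gs k rs!j) c))"
    using Cons.prems h unfolding vk_def by (auto intro!: sum.neutral)
  then show ?case using h by (simp add: Let_def)
qed

lemma gs_orth: "i < length rs \<Longrightarrow> j < length rs \<Longrightarrow> i \<noteq> j \<Longrightarrow> ip k (gs k rs ! i) (gs k rs ! j) = 0"
proof (induction rs arbitrary: i j)
  case Nil then show ?case by simp
next
  case (Cons r rs)
  define qs where "qs = gs k rs"
  define q0 where "q0 = (\<lambda>c. r c - (\<Sum>j<length qs. coef k r (qs!j) * (qs!j) c))"
  have g: "gs k (r # rs) = q0 # qs" by (simp add: qs_def q0_def Let_def)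
  have o: "ip k q0 (qs!t) = 0" if t: "t < length qs" for t
  proof -
    have "ip k q0 (qs!t) = ip k r (qs!t) - (\<Sum>j<length qs. coef k r (qs!j) * ip k (qs!j) (qs!t))"
      unfolding q0_def ip_diff_left ip_lin_left ..
    also have "(\<Sum>j<length qs. coef k r (qs!j) * ip k (qs!j) (qs!t)) = coef k r (qs!t) * ip k (qs!t) (qs!t)"
      by (rule sum.remove[where x=t, THEN trans]) (use t Cons.IH in \<open>auto simp: qs_def intro!: sum.neutral\<close>)
    also have "ip k r (qs!t) - coef k r (qs!t) * ip k (qs!t) (qs!t) = 0"
      by (cases "nrm2 k (qs!t) = 0") (auto simp: coef_def ip_self ip_zero_right)
    finally show ?thesis .
  qed
  show ?case
  proof (cases i)
    case 0
    then obtain j' where "j = Suc j'" using Cons.prems by (cases j) auto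
    then show ?thesis using 0 o[of j'] Cons.prems unfolding g by (simp add: qs_def)
  next
    case (Suc i')
    show ?thesis
    proof (cases j)
      case 0
      have "ip k (qs!i') q0 = 0" using o[of i'] Cons.prems Suc by (subst ip_cnj) (simp add: qs_def)
      then show ?thesis using Suc 0 unfolding g by simp
    next
      case (Suc j')
      then show ?thesis using \<open>i = Suc i'\<close> Cons.prems Cons.IH[of i' j'] unfolding g by (simp add: qs_def)
    qed
  qed
qed



lemma gs_span: "t < length rs \<Longrightarrow> \<exists>\<alpha>. \<forall>c. (rs!t) c = (\<Sum>j<length rs. \<alpha> j * (gs k rs ! j) c)"
proof -
  assume t: "t < length rs"
  let ?G = "gs k rs"
  define \<alpha> where "\<alpha> j = (if j = t then 1 else if t < j then coef k (rs!t) (?G!j) else 0)" for j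
  have "(rs!t) c = (\<Sum>j<length rs. \<alpha> j * (?G ! j) c)" for c
  proof -
    have disj: "{t<..<length rs} \<inter> {..<t} = {}" by auto
    have "{..<length rs} = insert t ({t<..<length rs} \<union> {..<t})" using t by auto
    then have "(\<Sum>j<length rs. \<alpha> j * (?G ! j) c) = \<alpha> t * (?G!t) c + ((\<Sum>j\<in>{t<..<length rs}. \<alpha> j * (?G ! j) c) + (\<Sum>j\<in>{..<t}. \<alpha> j * (?G ! j) c))"
      by (simp add: sum.union_disjoint disj)
    also have "\<dots> = (?G!t) c + (\<Sum>j\<in>{t<..<length rs}. coef k (rs!t) (?G!j) * (?G ! j) c)"
      by (simp add: \<alpha>_def)
    also have "\<dots> = (rs!t) c" using gs_nth[OF t, of k] by simp
    finally show ?thesis by simp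
  qed
  then show ?thesis by blast
qed

lemma gs_expand:
  assumes vk: "\<forall>x\<in>set rs. vk k x"
    and x: "\<And>c. x c = (\<Sum>j<length rs. \<beta> j * (gs k rs ! j) c)"
  shows "x c = (\<Sum>j<length rs. coef k x (gs k rs ! j) * (gs k rs ! j) c)"
proof -
  let ?G = "gs k rs"
  have vkG: "vk k (?G!j)" if "j < length rs" for j using vk_gs[OF vk] that by simp
  have "\<beta> j * (?G!j) c = coef k x (?G!j) * (?G!j) c" if j: "j < length rs" for j
  proof (cases "nrm2 k (?G!j) = 0")
    case True
    have "(?G!j) c = 0"
    proof (cases "c < k")
      case True then show ?thesis using nrm2_zero \<open>nrm2 k (?G!j) = 0\<close> by blast
    next
      case False then show ?thesis using vkG[OF j] unfolding vk_def by simp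
    qed
    then show ?thesis by simp
  next
    case False
    have xe: "x = (\<lambda>c. \<Sum>j<length rs. \<beta> j * (?G ! j) c)" using x by auto
    have "ip k x (?G!j) = (\<Sum>i<length rs. \<beta> i * ip k (?G ! i) (?G!j))"
      unfolding xe ip_lin_left ..
    also have "\<dots> = \<beta> j * ip k (?G ! j) (?G!j)"
      by (rule sum.remove[where x=j, THEN trans]) (use j gs_orth in \<open>auto intro!: sum.neutral\<close>)
    finally have "coef k x (?G!j) = \<beta> j" using False by (simp add: coef_def ip_self)
    then show ?thesis by simp
  qed
  then show ?thesis using x[of c] by (auto intro!: sum.cong)
qed

definition ebasis :: "nat \<Rightarrow> (nat \<Rightarrow> complex) list" where
  "ebasis k = map (\<lambda>c' c. if c = c' then 1 else 0) [0..<k]"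

lemma vk_ebasis: "\<forall>x\<in>set (ebasis k). vk k x"
  unfolding ebasis_def vk_def by auto

lemma ebasis_expand_all:
  assumes vkL: "\<forall>x\<in>set L. vk k x" and vkx: "vk k x"
  shows "x c = (\<Sum>j<k + length L. coef k x (gs k (ebasis k @ L) ! j) * (gs k (ebasis k @ L) ! j) c)"
proof -
  let ?rs = "ebasis k @ L"
  let ?G = "gs k ?rs"
  have len: "length ?rs = k + length L" by (simp add: ebasis_def)
  have "\<forall>c'. \<exists>\<alpha>. c' < k \<longrightarrow> (\<forall>c. (?rs!c') c = (\<Sum>j<length ?rs. \<alpha> j * (?G ! j) c))"
  proof
    fix c'
    show "\<exists>\<alpha>. c' < k \<longrightarrow> (\<forall>c. (?rs!c') c = (\<Sum>j<length ?rs. \<alpha> j * (?G ! j) c))"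
    proof (cases "c' < k")
      case True
      then have "c' < length ?rs" using len by simp
      from gs_span[OF this, of k] show ?thesis by blast
    qed auto
  qed
  then have "\<exists>\<alpha>. \<forall>c'. c' < k \<longrightarrow> (\<forall>c. (?rs!c') c = (\<Sum>j<length ?rs. \<alpha> c' j * (?G ! j) c))"
    by (rule choice)
  then obtain \<alpha> where \<alpha>: "\<And>c' c. c' < k \<Longrightarrow> (?rs!c') c = (\<Sum>j<length ?rs. \<alpha> c' j * (?G ! j) c)"
    by blast
  have e: "(?rs!c') c = (if c = c' then 1 else 0)" if "c' < k" for c' c
    using that by (simp add: ebasis_def nth_append)
  have xs: "x c = (\<Sum>j<length ?rs. (\<Sum>c'<k. x c' * \<alpha> c' j) * (?G ! j) c)" for c
  proof -
    have "x c = (\<Sum>c'<k. x c' * (?rs!c') c)"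
    proof (cases "c < k")
      case True
      then have "(\<Sum>c'<k. x c' * (?rs!c') c) = x c * (?rs!c) c"
        by (intro sum.remove[where x=c, THEN trans]) (auto simp: e intro!: sum.neutral)
      then show ?thesis using True e by simp
    next
      case False
      then show ?thesis using vkx unfolding vk_def by (auto simp: e intro!: sum.neutral)
    qed
    also have "\<dots> = (\<Sum>c'<k. x c' * (\<Sum>j<length ?rs. \<alpha> c' j * (?G ! j) c))"
      by (auto intro!: sum.cong simp: \<alpha>)
    also have "\<dots> = (\<Sum>j<length ?rs. (\<Sum>c'<k. x c' * \<alpha> c' j) * (?G ! j) c)"
      unfolding sum_distrib_left sum_distrib_right by (subst sum.swap) (simp add: mult.assoc)
    finally show ?thesis .
  qed
  have vkrs: "\<forall>x\<in>set ?rs. vk k x" using vkL vk_ebasis by auto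
  show ?thesis using gs_expand[OF vkrs xs, of c] len by simp
qed



definition fn :: "nat \<Rightarrow> (nat \<Rightarrow> complex) \<Rightarrow> (nat \<Rightarrow> complex)" where
  "fn k q = (\<lambda>c. q c / of_real (sqrt (nrm2 k q)))"

lemma ip_bilin: "ip k (\<lambda>c. \<Sum>i\<in>A. a i * u i c) (\<lambda>c. \<Sum>j\<in>B. b j * v j c) =
   (\<Sum>i\<in>A. \<Sum>j\<in>B. a i * cnj (b j) * ip k (u i) (v j))"
  unfolding ip_lin_left ip_lin_right by (simp add: sum_distrib_left mult.assoc)

lemma ip_fn_right: "ip k x (fn k q) = ip k x q / of_real (sqrt (nrm2 k q))"
  unfolding ip_def fn_def by (simp add: sum_divide_distrib)

lemma ip_fn_left: "ip k (fn k q) x = ip k q x / of_real (sqrt (nrm2 k q))"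
  unfolding ip_def fn_def by (simp add: sum_divide_distrib)

lemma ip_fn_fn: "ip k (fn k q) (fn k q') = ip k q q' / (of_real (sqrt (nrm2 k q)) * of_real (sqrt (nrm2 k q')))"
  unfolding ip_fn_left ip_fn_right by simp

lemma ip_fn_self: "nrm2 k q \<noteq> 0 \<Longrightarrow> ip k (fn k q) (fn k q) = 1"
proof -
  assume h: "nrm2 k q \<noteq> 0"
  have p: "nrm2 k q > 0" using h nrm2_nonneg[of k q] by linarith
  have "of_real (sqrt (nrm2 k q)) * of_real (sqrt (nrm2 k q)) = (of_real (nrm2 k q) :: complex)"
  proof -
    have "sqrt (nrm2 k q) * sqrt (nrm2 k q) = nrm2 k q" using p by simp
    then show ?thesis unfolding of_real_mult[symmetric] by simp
  qed
  then show ?thesis unfolding ip_fn_fn unfolding ip_self using h by simp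
qed

lemma nrm2_ip: "complex_of_real (nrm2 k x) = ip k x x" by (simp add: ip_self)

lemma nrm2_eq_Re: "nrm2 k x = Re (ip k x x)" by (simp add: ip_self)

lemma bessel:
  assumes fin: "finite I" and on: "\<And>i j. i \<in> I \<Longrightarrow> j \<in> I \<Longrightarrow> ip k (f i) (f j) = (if i = j then 1 else 0)"
  shows "(\<Sum>i\<in>I. (cmod (ip k x (f i)))^2) \<le> nrm2 k x"
proof -
  define a where "a i = ip k x (f i)" for i
  define y where "y = (\<lambda>c. \<Sum>i\<in>I. a i * f i c)"
  define S where "S = (\<Sum>i\<in>I. (cmod (a i))^2)"
  have aa: "a i * cnj (a i) = of_real ((cmod (a i))^2)" for i by (rule complex_norm_square[symmetric])
  have xy: "ip k x y = of_real S"
    unfolding y_def ip_lin_right S_def of_real_sum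
  proof (rule sum.cong[OF refl])
    fix i show "cnj (a i) * ip k x (f i) = of_real ((cmod (a i))^2)"
      unfolding a_def[symmetric] aa[symmetric] by (simp add: mult.commute)
  qed
  have yx: "ip k y x = of_real S" using xy by (subst ip_cnj) simp
  have yy: "ip k y y = of_real S"
  proof -
    have "ip k y y = (\<Sum>i\<in>I. \<Sum>j\<in>I. a i * cnj (a j) * ip k (f i) (f j))" unfolding y_def ip_bilin ..
    also have "\<dots> = (\<Sum>i\<in>I. a i * cnj (a i))"
    proof (rule sum.cong[OF refl])
      fix i assume i: "i \<in> I"
      show "(\<Sum>j\<in>I. a i * cnj (a j) * ip k (f i) (f j)) = a i * cnj (a i)"
        by (rule sum.remove[where x=i, THEN trans]) (use i fin on in \<open>auto intro!: sum.neutral split: if_splits\<close>)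
    qed
    also have "\<dots> = of_real S" unfolding S_def of_real_sum aa ..
    finally show ?thesis .
  qed
  have "ip k (\<lambda>c. x c - y c) (\<lambda>c. x c - y c) = ip k x x - of_real S"
    unfolding ip_diff_left ip_diff_right xy yx yy by simp
  then have "nrm2 k (\<lambda>c. x c - y c) = nrm2 k x - S"
    unfolding nrm2_eq_Re by simp
  then show ?thesis using nrm2_nonneg[of k "\<lambda>c. x c - y c"] unfolding S_def a_def by linarith
qed

lemma card_orthonormal:
  assumes fin: "finite I" and on: "\<And>i j. i \<in> I \<Longrightarrow> j \<in> I \<Longrightarrow> ip k (f i) (f j) = (if i = j then 1 else 0)"
  shows "card I \<le> k"
proof -
  define e :: "nat \<Rightarrow> nat \<Rightarrow> complex" where "e c' = (\<lambda>c. if c = c' then 1 else 0 :: complex)" for c'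
  have ie: "ip k (e c) g = cnj (g c)" if "c < k" for c g
    unfolding ip_def e_def using that by (subst sum.remove[where x=c]) (auto intro!: sum.neutral)
  have ne: "nrm2 k (e c) = 1" if "c < k" for c
    unfolding nrm2_def e_def using that by (subst sum.remove[where x=c]) (auto intro!: sum.neutral)
  have "real (card I) = (\<Sum>i\<in>I. nrm2 k (f i))"
    using on by (simp add: nrm2_eq_Re)
  also have "\<dots> = (\<Sum>c<k. \<Sum>i\<in>I. (cmod (ip k (e c) (f i)))^2)"
    unfolding nrm2_def by (subst sum.swap) (auto intro!: sum.cong simp: ie)
  also have "\<dots> \<le> (\<Sum>c<k. nrm2 k (e c))"
    by (rule sum_mono) (rule bessel[OF fin on])
  also have "\<dots> = real k" by (simp add: ne)
  finally show ?thesis by simp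
qed



lemma gs_orth_fn:
  assumes "i < length rs" "j < length rs" "nrm2 k (gs k rs ! i) \<noteq> 0" "nrm2 k (gs k rs ! j) \<noteq> 0"
  shows "ip k (fn k (gs k rs ! i)) (fn k (gs k rs ! j)) = (if i = j then 1 else 0)"
  using assms gs_orth[of i rs j k] ip_fn_self by (auto simp: ip_fn_fn)

lemma length_ebasis[simp]: "length (ebasis k) = k" by (simp add: ebasis_def)

lemma fs_count:
  assumes nz: "\<forall>q\<in>set (gs k L). nrm2 k q \<noteq> 0"
  shows "card {s. s < k \<and> nrm2 k (gs k (ebasis k @ L) ! s) \<noteq> 0} + length L \<le> k"
proof -
  let ?G = "gs k (ebasis k @ L)"
  define I where "I = {s. s < k + length L \<and> nrm2 k (?G ! s) \<noteq> 0}"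
  define F where "F = {s. s < k \<and> nrm2 k (?G ! s) \<noteq> 0}"
  have Gk: "?G ! (k + j) = gs k L ! j" if "j < length L" for j
    using gs_nth_drop[of k j "ebasis k @ L"] that by simp
  have "{k..<k + length L} \<subseteq> I"
  proof
    fix s assume s: "s \<in> {k..<k + length L}"
    then have "?G ! s = gs k L ! (s - k)" using Gk[of "s - k"] by auto
    moreover have "gs k L ! (s - k) \<in> set (gs k L)" using s by auto
    ultimately show "s \<in> I" using nz s unfolding I_def by auto
  qed
  then have IU: "I = F \<union> {k..<k + length L}" unfolding I_def F_def by auto
  have "card I \<le> k"
    by (rule card_orthonormal[where f = "\<lambda>s. fn k (?G ! s)"]) (auto simp: I_def gs_orth_fn)
  moreover have "card I = card F + length L"
    unfolding IU by (subst card_Un_disjoint) (auto simp: F_def)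
  ultimately show ?thesis unfolding F_def by simp
qed

lemma sum_split_add: "(\<Sum>j<(k::nat)+d. f j) = (\<Sum>j<k. f j) + (\<Sum>j<d. (f (k+j) :: 'a :: comm_monoid_add))"
  by (induction d) (simp_all add: add.assoc)

lemma row_bound:
  assumes vkL: "\<forall>x\<in>set L. vk k x" and vkxs: "\<forall>x\<in>set xs. vk k x" and i: "i < length xs"
  shows "nrm2 k (gs k (xs @ L) ! i) \<le>
    (\<Sum>s\<in>{s. s < k \<and> nrm2 k (gs k (ebasis k @ L) ! s) \<noteq> 0}. (cmod (ip k (xs!i) (fn k (gs k (ebasis k @ L) ! s))))^2)"
proof -
  let ?G = "gs k (ebasis k @ L)"
  let ?P = "gs k (xs @ L)"
  define x where "x = xs ! i"
  define q where "q = ?P ! i"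
  define nx where "nx = length xs"
  define d where "d = length L"
  define F where "F = {s. s < k \<and> nrm2 k (?G ! s) \<noteq> 0}"
  have vkx: "vk k x" using vkxs i x_def by auto
  have il: "i < length (xs @ L)" using i by simp
  have Gk: "?G ! (k + j) = gs k L ! j" if "j < d" for j
    using gs_nth_drop[of k j "ebasis k @ L"] that d_def by simp
  have Pk: "?P ! (nx + j) = gs k L ! j" if "j < d" for j
    using gs_nth_drop[of nx j "xs @ L"] that d_def nx_def by simp
  define g where "g = (\<lambda>c. \<Sum>j<k. coef k x (?G!j) * (?G!j) c)"
  define h where "h = (\<lambda>c. (\<Sum>j\<in>{i<..<nx + d}. coef k x (?P!j) * (?P!j) c) - (\<Sum>j<d. coef k x (?P!(nx+j)) * (?P!(nx+j)) c))"
  have x1: "x c = q c + (\<Sum>j\<in>{i<..<nx + d}. coef k x (?P!j) * (?P!j) c)" for c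
    using gs_nth[OF il, of k] unfolding q_def x_def nx_def d_def by (simp add: nth_append i)
  have x2: "x c = g c + (\<Sum>j<d. coef k x (?P!(nx+j)) * (?P!(nx+j)) c)" for c
  proof -
    have "x c = (\<Sum>j<k + d. coef k x (?G ! j) * (?G ! j) c)"
      using ebasis_expand_all[OF vkL vkx, of c] d_def by simp
    also have "\<dots> = g c + (\<Sum>j<d. coef k x (?G!(k+j)) * (?G!(k+j)) c)"
      unfolding g_def by (rule sum_split_add)
    also have "(\<Sum>j<d. coef k x (?G!(k+j)) * (?G!(k+j)) c) = (\<Sum>j<d. coef k x (?P!(nx+j)) * (?P!(nx+j)) c)"
      by (rule sum.cong) (auto simp: Gk Pk)
    finally show ?thesis .
  qed
  have gqh: "g c = q c + h c" for c using x1[of c] x2[of c] unfolding h_def by (simp add: algebra_simps)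
  have qP: "ip k q (?P!j) = 0" if "i < j" "j < nx + d" for j
    unfolding q_def using gs_orth[of i "xs @ L" j k] that i nx_def d_def by simp
  have qh: "ip k q h = 0"
  proof -
    have s1: "(\<Sum>j\<in>{i<..<nx+d}. cnj (coef k x (?P!j)) * ip k q (?P!j)) = 0"
      by (rule sum.neutral) (auto simp: qP)
    have s2: "(\<Sum>j<d. cnj (coef k x (?P!(nx+j))) * ip k q (?P!(nx+j))) = 0"
      by (rule sum.neutral) (use qP i nx_def in auto)
    show ?thesis unfolding h_def ip_diff_right ip_lin_right s1 s2 by simp
  qed
  have hq: "ip k h q = 0" using qh by (subst ip_cnj) simp
  have "ip k g g = ip k q q + ip k h h"
  proof -
    have "g = (\<lambda>c. q c + h c)" using gqh by auto
    then have "ip k g g = ip k (\<lambda>c. q c + h c) (\<lambda>c. q c + h c)" by simp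
    also have "\<dots> = ip k q q + ip k h h" unfolding ip_add_left ip_add_right qh hq by simp
    finally show ?thesis .
  qed
  then have ng: "nrm2 k g = nrm2 k q + nrm2 k h" unfolding nrm2_eq_Re by simp
  have "ip k g g = (\<Sum>s<k. \<Sum>t<k. coef k x (?G!s) * cnj (coef k x (?G!t)) * ip k (?G!s) (?G!t))"
    unfolding g_def ip_bilin ..
  also have "\<dots> = (\<Sum>s<k. coef k x (?G!s) * cnj (coef k x (?G!s)) * ip k (?G!s) (?G!s))"
  proof (rule sum.cong[OF refl])
    fix s assume s: "s \<in> {..<k}"
    show "(\<Sum>t<k. coef k x (?G!s) * cnj (coef k x (?G!t)) * ip k (?G!s) (?G!t)) = coef k x (?G!s) * cnj (coef k x (?G!s)) * ip k (?G!s) (?G!s)"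
      by (rule sum.remove[where x=s, THEN trans]) (use s gs_orth[of _ "ebasis k @ L" _ k] in \<open>auto intro!: sum.neutral\<close>)
  qed
  also have "\<dots> = (\<Sum>s\<in>F. of_real ((cmod (ip k x (fn k (?G!s))))^2))"
  proof -
    have "coef k x (?G!s) * cnj (coef k x (?G!s)) * ip k (?G!s) (?G!s) =
        (if s \<in> F then of_real ((cmod (ip k x (fn k (?G!s))))^2) else 0)" if s: "s < k" for s
    proof (cases "nrm2 k (?G!s) = 0")
      case True then show ?thesis by (simp add: coef_def F_def)
    next
      case False
      define a where "a = nrm2 k (?G!s)"
      define z where "z = ip k x (?G!s)"
      have a: "a > 0" using False nrm2_nonneg[of k "?G!s"] a_def by linarith
      have "(cmod (ip k x (fn k (?G!s))))^2 = (cmod z)^2 / a"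
        unfolding ip_fn_right z_def[symmetric] a_def[symmetric] using a
        by (simp add: norm_divide power_divide)
      moreover have "coef k x (?G!s) * cnj (coef k x (?G!s)) * ip k (?G!s) (?G!s) = z * cnj z / of_real a"
        unfolding coef_def ip_self a_def[symmetric] z_def[symmetric] using a by (simp add: field_simps)
      moreover have zz: "z * cnj z = (complex_of_real (cmod z))^2"
        using complex_norm_square[of z] unfolding of_real_power by simp
      ultimately show ?thesis using False s by (simp add: F_def zz)
    qed
    then have "(\<Sum>s<k. coef k x (?G!s) * cnj (coef k x (?G!s)) * ip k (?G!s) (?G!s)) =
      (\<Sum>s<k. if s \<in> F then of_real ((cmod (ip k x (fn k (?G!s))))^2) else 0)"
      by (auto intro!: sum.cong)
    also have "\<dots> = (\<Sum>s\<in>F. of_real ((cmod (ip k x (fn k (?G!s))))^2))"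
      by (subst sum.If_cases) (auto simp: F_def intro!: sum.cong)
    finally show ?thesis .
  qed
  finally have "nrm2 k g = (\<Sum>s\<in>F. (cmod (ip k x (fn k (?G!s))))^2)"
    unfolding nrm2_eq_Re by (simp add: Re_sum)
  then show ?thesis using ng nrm2_nonneg[of k h] unfolding q_def x_def F_def by linarith
qed



lemma cell_bounds:
  fixes y :: real and m :: nat
  assumes "0 \<le> y" "y \<le> m" "m \<ge> 1"
  shows "real (min (m - 1) (nat \<lfloor>y\<rfloor>)) \<le> y \<and> y \<le> real (min (m - 1) (nat \<lfloor>y\<rfloor>)) + 1"
proof (cases "nat \<lfloor>y\<rfloor> \<le> m - 1")
  case True
  then have "min (m - 1) (nat \<lfloor>y\<rfloor>) = nat \<lfloor>y\<rfloor>" by simp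
  moreover have "real (nat \<lfloor>y\<rfloor>) = of_int \<lfloor>y\<rfloor>" using assms by simp
  ultimately show ?thesis by (simp add: of_int_floor_le)
next
  case False
  then have "min (m - 1) (nat \<lfloor>y\<rfloor>) = m - 1" by simp
  moreover have "real (m - 1) = real m - 1" using assms by simp
  moreover have "real (m - 1) \<le> y"
  proof -
    have "int (m - 1) < \<lfloor>y\<rfloor>" using False by (simp add: zless_nat_eq_int_zless)
    then have "real_of_int (int (m - 1)) \<le> of_int \<lfloor>y\<rfloor>" by linarith
    then show ?thesis by linarith
  qed
  ultimately show ?thesis using assms by simp
qed

lemma dirichlet:
  fixes S :: "'a set" and w :: "'a \<Rightarrow> nat \<Rightarrow> real" and r Dm N :: nat and W :: real
  assumes finS: "finite S" and cS: "card S \<le> Dm" and Dm: "Dm \<ge> 1" and N: "N \<ge> 1" and r: "r \<ge> 1" and W: "W > 0"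
    and wb: "\<And>s. s \<in> S \<Longrightarrow> (\<Sum>t\<in>{1..r}. \<bar>w s t\<bar>) \<le> W"
  shows "\<exists>b::nat\<Rightarrow>int. (\<forall>i\<in>{1..r}. - int N \<le> b i \<and> b i \<le> int N) \<and> (\<exists>i\<in>{1..r}. b i \<noteq> 0) \<and>
     (\<forall>s\<in>S. \<bar>\<Sum>t\<in>{1..r}. of_int (b t) * w s t\<bar> \<le> 4 * N * W * N powr (- (r / Dm)))"
proof -
  define A where "A = N * W"
  have A: "A > 0" using N W by (simp add: A_def)
  define x where "x = real N powr (r / Dm)"
  have x1: "x \<ge> 1" unfolding x_def using N by (intro ge_one_powr_ge_zero) auto
  define m where "m = nat \<lfloor>x\<rfloor>"
  have m1: "m \<ge> 1" unfolding m_def using x1 by (simp add: le_nat_iff)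
  have mx: "real m \<le> x" unfolding m_def using x1 by simp
  have mx2: "real m \<ge> x / 2"
  proof -
    have "real m = of_int \<lfloor>x\<rfloor>" unfolding m_def using x1 by simp
    moreover have "of_int \<lfloor>x\<rfloor> > x - 1" by linarith
    moreover have "(of_int \<lfloor>x\<rfloor> :: real) \<ge> 1" using x1 by simp
    ultimately show ?thesis by linarith
  qed
  define g where "g s b = (\<Sum>t\<in>{1..r}. of_int (b t) * w s t)" for s and b :: "nat \<Rightarrow> int"
  define P where "P = PiE {1..r} (\<lambda>_. {0..int N})"
  have gb: "\<bar>g s b\<bar> \<le> A" if s: "s \<in> S" and b: "b \<in> P" for s b
  proof -
    have "\<bar>g s b\<bar> \<le> (\<Sum>t\<in>{1..r}. \<bar>of_int (b t) * w s t\<bar>)" unfolding g_def by (rule sum_abs)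
    also have "\<dots> \<le> (\<Sum>t\<in>{1..r}. real N * \<bar>w s t\<bar>)"
    proof (rule sum_mono)
      fix t assume t: "t \<in> {1..r}"
      then have "0 \<le> b t" "b t \<le> int N" using b unfolding P_def by (auto simp: PiE_iff)
      then have "\<bar>real_of_int (b t)\<bar> \<le> real N" by simp
      then show "\<bar>of_int (b t) * w s t\<bar> \<le> real N * \<bar>w s t\<bar>"
        by (simp add: abs_mult mult_right_mono)
    qed
    also have "\<dots> \<le> real N * W" unfolding sum_distrib_left[symmetric] using wb[OF s] by (simp add: mult_left_mono)
    finally show ?thesis unfolding A_def .
  qed
  define y where "y s b = (g s b + A) * m / (2 * A)" for s b
  have y0: "0 \<le> y s b" "y s b \<le> m" if "s \<in> S" "b \<in> P" for s b
  proof -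
    have "-A \<le> g s b" "g s b \<le> A" using gb[OF that] by linarith+
    then have h1: "0 \<le> g s b + A" "g s b + A \<le> 2*A" by linarith+
    show "0 \<le> y s b" unfolding y_def using h1 A by simp
    have "(g s b + A) * m \<le> (2*A) * m" using h1 by (simp add: mult_right_mono)
    then show "y s b \<le> m" unfolding y_def using A by (simp add: pos_divide_le_eq mult.commute)
  qed
  define cell where "cell b = (\<lambda>s\<in>S. min (m - 1) (nat \<lfloor>y s b\<rfloor>))" for b
  have cellP: "cell ` P \<subseteq> PiE S (\<lambda>_. {..<m})"
    unfolding cell_def using m1 by (auto simp: PiE_iff)
  have cardP: "card P = (N + 1) ^ r" unfolding P_def by (simp add: card_PiE nat_add_distrib)
  have cardT: "card (PiE S (\<lambda>_. {..<m})) = m ^ card S" using finS by (simp add: card_PiE)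
  have "m ^ card S \<le> m ^ Dm" using m1 cS by (simp add: power_increasing)
  moreover have "real (m ^ Dm) \<le> real N ^ r"
  proof -
    have "real (m ^ Dm) \<le> x ^ Dm" using mx by (simp add: power_mono)
    also have "x ^ Dm = real N ^ r" unfolding x_def using N Dm
      by (simp add: powr_realpow[symmetric] powr_powr)
    finally show ?thesis .
  qed
  moreover have "real N ^ r < real (N + 1) ^ r" using r by (intro power_strict_mono) auto
  ultimately have "real (m ^ Dm) < real ((N + 1) ^ r)" by simp
  then have "m ^ Dm < (N + 1) ^ r" by (simp only: of_nat_less_iff)
  then have lt: "card (PiE S (\<lambda>_. {..<m})) < card P"
    unfolding cardT cardP using \<open>m ^ card S \<le> m ^ Dm\<close> by linarith
  have "\<not> inj_on cell P"
  proof
    assume "inj_on cell P"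
    then have "card P \<le> card (PiE S (\<lambda>_. {..<m}))"
      by (rule card_inj_on_le[OF _ cellP]) (use finS in \<open>simp add: finite_PiE\<close>)
    then show False using lt by simp
  qed
  then obtain b1 b2 where b1: "b1 \<in> P" and b2: "b2 \<in> P" and ne: "b1 \<noteq> b2" and ceq: "cell b1 = cell b2"
    unfolding inj_on_def by blast
  define b where "b i = b1 i - b2 i" for i
  have bb: "\<forall>i\<in>{1..r}. - int N \<le> b i \<and> b i \<le> int N"
    using b1 b2 unfolding P_def b_def by (force simp: PiE_iff)
  have bnz: "\<exists>i\<in>{1..r}. b i \<noteq> 0"
  proof (rule ccontr)
    assume "\<not> ?thesis"
    then have "\<forall>i\<in>{1..r}. b1 i = b2 i" unfolding b_def by auto
    then have "b1 = b2" using b1 b2 unfolding P_def by (auto simp: PiE_iff extensional_def fun_eq_iff)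
    then show False using ne by simp
  qed
  have gs: "\<bar>g s b\<bar> \<le> 4 * N * W * N powr (- (r / Dm))" if s: "s \<in> S" for s
  proof -
    have e: "min (m - 1) (nat \<lfloor>y s b1\<rfloor>) = min (m - 1) (nat \<lfloor>y s b2\<rfloor>)"
      using fun_cong[OF ceq, of s] s unfolding cell_def by simp
    have "\<bar>y s b1 - y s b2\<bar> \<le> 1"
      using cell_bounds[OF y0[OF s b1] m1] cell_bounds[OF y0[OF s b2] m1] e by linarith
    moreover have "y s b1 - y s b2 = g s b * m / (2 * A)"
    proof -
      have "g s b = g s b1 - g s b2"
        unfolding g_def b_def by (simp add: sum_subtractf[symmetric] left_diff_distrib)
      then show ?thesis unfolding y_def by (simp add: diff_divide_distrib[symmetric] algebra_simps flip: distrib_left)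
    qed
    ultimately have "\<bar>g s b\<bar> * m / (2 * A) \<le> 1" using A m1 by (simp add: abs_mult abs_divide)
    then have "\<bar>g s b\<bar> \<le> 2 * A / m" using A m1 by (simp add: field_simps)
    also have "\<dots> \<le> 2 * A / (x / 2)" using A x1 mx2 by (intro divide_left_mono) auto
    also have "\<dots> = 4 * N * W * N powr (- (r / Dm))"
      unfolding x_def A_def using N by (simp add: powr_minus field_simps)
    finally show ?thesis .
  qed
  show ?thesis using bb bnz gs unfolding g_def by blast
qed



definition rowv :: "nat \<Rightarrow> complex mat \<Rightarrow> nat \<Rightarrow> (nat \<Rightarrow> complex)" where
  "rowv k M i = (\<lambda>c. if c < k then M $$ (i, c) else 0)"

definition mrows :: "nat \<Rightarrow> complex mat \<Rightarrow> (nat \<Rightarrow> complex) list" where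
  "mrows k M = map (rowv k M) [0..<dim_row M]"

lemma vk_rowv: "vk k (rowv k M i)" unfolding vk_def rowv_def by simp

lemma vk_mrows: "\<forall>x\<in>set (mrows k M). vk k x" unfolding mrows_def by (auto simp: vk_rowv)

lemma length_mrows[simp]: "length (mrows k M) = dim_row M" unfolding mrows_def by simp

lemma nth_mrows[simp]: "i < dim_row M \<Longrightarrow> mrows k M ! i = rowv k M i" unfolding mrows_def by simp

lemma lat_nonzero:
  assumes B: "full_rank_lattice_basis n k B" and b: "\<exists>i\<in>{1..2*k*n}. b i \<noteq> 0"
  shows "lat_comb n k (2*k*n) B b \<noteq> 0\<^sub>m n k"
proof
  assume z: "lat_comb n k (2*k*n) B b = 0\<^sub>m n k"
  have "mat n k (\<lambda>(a,d). \<Sum>i\<in>{1..2*k*n}. of_real (real_of_int (b i)) * (B i $$ (a,d))) = 0\<^sub>m n k"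
    using z unfolding lat_comb_def by simp
  moreover have "\<forall>c :: nat \<Rightarrow> real. mat n k (\<lambda>(a,d). \<Sum>i\<in>{1..2*k*n}. of_real (c i) * (B i $$ (a,d))) = 0\<^sub>m n k
        \<longrightarrow> (\<forall>i\<in>{1..2*k*n}. c i = 0)"
    using B unfolding full_rank_lattice_basis_def by blast
  ultimately have "\<forall>i\<in>{1..2*k*n}. real_of_int (b i) = 0"
    by (rule mp[OF spec[where x="\<lambda>i. real_of_int (b i)"], rotated])
  then show False using b by auto
qed

lemma lat_in_trunc:
  assumes "\<forall>i\<in>{1..2*k*n}. - int N \<le> b i \<and> b i \<le> int N"
  shows "lat_comb n k (2*k*n) B b \<in> trunc_lattice n k B N"
  using assms unfolding trunc_lattice_def by blast

lemma ip_lat_row: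
  assumes i: "i < n"
  shows "ip k (rowv k (lat_comb n k r B b) i) y = (\<Sum>t\<in>{1..r}. of_int (b t) * ip k (rowv k (B t) i) y)"
proof -
  have "ip k (rowv k (lat_comb n k r B b) i) y = (\<Sum>c<k. (\<Sum>t\<in>{1..r}. of_int (b t) * B t $$ (i, c)) * cnj (y c))"
    unfolding ip_def rowv_def lat_comb_def using i by (auto intro!: sum.cong)
  also have "\<dots> = (\<Sum>t\<in>{1..r}. of_int (b t) * ip k (rowv k (B t) i) y)"
    unfolding ip_def rowv_def sum_distrib_right sum_distrib_left by (subst sum.swap) (auto intro!: sum.cong simp: mult.assoc)
  finally show ?thesis .
qed

definition lconst :: "nat \<Rightarrow> nat \<Rightarrow> (nat \<Rightarrow> complex mat) \<Rightarrow> real" where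
  "lconst n k B = (\<Sum>t\<in>{1..2*k*n}. \<Sum>a<n. \<Sum>c<k. cmod (B t $$ (a, c))) + 1"

lemma lconst_pos: "lconst n k B > 0"
  unfolding lconst_def by (simp add: add_nonneg_pos sum_nonneg)

lemma fn_entry_le1:
  assumes "nrm2 k q \<noteq> 0" "c < k"
  shows "cmod (fn k q c) \<le> 1"
proof -
  have "nrm2 k (fn k q) = 1" using ip_fn_self[OF assms(1)] unfolding nrm2_eq_Re by simp
  moreover have "(cmod (fn k q c))^2 \<le> nrm2 k (fn k q)"
    unfolding nrm2_def using assms(2) by (intro member_le_sum) auto
  ultimately have "(cmod (fn k q c))^2 \<le> 1" by simp
  then show ?thesis by (simp add: power_le_one_iff abs_le_square_iff)
qed

lemma ip_row_bound:
  assumes "nrm2 k q \<noteq> 0"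
  shows "cmod (ip k (rowv k M i) (fn k q)) \<le> (\<Sum>c<k. cmod (M $$ (i, c)))"
proof -
  have "cmod (ip k (rowv k M i) (fn k q)) \<le> (\<Sum>c<k. cmod (M $$ (i,c) * cnj (fn k q c)))"
    unfolding ip_def rowv_def by (simp add: sum_norm_le)
  also have "\<dots> \<le> (\<Sum>c<k. cmod (M $$ (i, c)))"
  proof (rule sum_mono)
    fix c assume "c \<in> {..<k}"
    then have "cmod (fn k q c) \<le> 1" using fn_entry_le1[OF assms] by simp
    then show "cmod (M $$ (i,c) * cnj (fn k q c)) \<le> cmod (M $$ (i, c))"
      by (simp add: norm_mult mult_left_le)
  qed
  finally show ?thesis .
qed



lemma powr_pow_nat: "x > 0 \<Longrightarrow> (x powr e) ^ m = x powr (e * real m)"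
  by (simp add: powr_realpow[symmetric] powr_powr)

lemma const_calc:
  fixes N k d n :: nat and W :: real
  assumes N: "N \<ge> 1" and dk: "d < k" and n: "n \<ge> 1"
  shows "(2 * real k * (4 * real N * W * real N powr (- (real (2*k*n) / real (2*n*(k-d)))))^2) ^ n
     = (32 * real k * W^2) ^ n * real N powr (- (2 * real n * real d) / (real k - real d))"
proof -
  have Np: "real N > 0" using N by simp
  have kd: "real k - real d > 0" using dk by simp
  have r: "real (2*k*n) / real (2*n*(k-d)) = real k / (real k - real d)"
    using dk n by (simp add: of_nat_diff field_simps)
  have "real N * real N powr (- (real k / (real k - real d))) = real N powr (1 + - (real k / (real k - real d)))"
    using Np by (simp only: powr_add powr_one_gt_zero_iff powr_one)
  also have "1 + - (real k / (real k - real d)) = - real d / (real k - real d)"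
    using kd by (simp add: field_simps)
  finally have e1: "real N * real N powr (- (real k / (real k - real d))) = real N powr (- real d / (real k - real d))" .
  have "(2 * real k * (4 * real N * W * real N powr (- (real (2*k*n) / real (2*n*(k-d)))))^2)
     = 32 * real k * W^2 * (real N * real N powr (- (real k / (real k - real d))))^2"
    unfolding r by (simp add: power2_eq_square algebra_simps)
  also have "\<dots> = 32 * real k * W^2 * real N powr (- real d / (real k - real d) * 2)"
    unfolding e1 using powr_pow_nat[OF Np, of _ 2] by simp
  finally have eq: "(2 * real k * (4 * real N * W * real N powr (- (real (2*k*n) / real (2*n*(k-d)))))^2)
     = 32 * real k * W^2 * real N powr (- real d / (real k - real d) * 2)" .
  have "(2 * real k * (4 * real N * W * real N powr (- (real (2*k*n) / real (2*n*(k-d)))))^2) ^ n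
     = (32 * real k * W^2 * real N powr (- real d / (real k - real d) * 2)) ^ n"
    by (rule arg_cong[OF eq])
  also have "\<dots> = (32 * real k * W^2) ^ n * (real N powr (- real d / (real k - real d) * 2)) ^ n"
    by (rule power_mult_distrib)
  also have "(real N powr (- real d / (real k - real d) * 2)) ^ n = real N powr (- (2 * real n * real d) / (real k - real d))"
    unfolding powr_pow_nat[OF Np] by (simp add: field_simps)
  finally show ?thesis .
qed



lemma block_choice:
  fixes n k d N :: nat and B :: "nat \<Rightarrow> complex mat" and L :: "(nat \<Rightarrow> complex) list"
  assumes n: "n \<ge> 1" and dk: "d < k" and N: "N \<ge> 1" and B: "full_rank_lattice_basis n k B"
    and vkL: "\<forall>x\<in>set L. vk k x" and lenL: "length L = d"
  shows "\<exists>X\<in>trunc_lattice n k B N - {0\<^sub>m n k}. ((\<forall>q\<in>set (gs k L). nrm2 k q \<noteq> 0) \<longrightarrow>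
     (\<Prod>i<n. nrm2 k (gs k (mrows k X @ L) ! i)) \<le>
        (32 * real k * (lconst n k B)^2)^n * real N powr (- (2 * real n * real d) / (real k - real d)))"
proof (cases "\<forall>q\<in>set (gs k L). nrm2 k q \<noteq> 0")
  case False
  define b0 :: "nat \<Rightarrow> int" where "b0 i = (if i = 1 then 1 else 0)" for i
  have "2*k*n \<ge> 1" using n dk by simp
  then have "lat_comb n k (2*k*n) B b0 \<in> trunc_lattice n k B N - {0\<^sub>m n k}"
    using lat_in_trunc[of k n N b0 B] lat_nonzero[OF B, of b0] N unfolding b0_def by auto
  then show ?thesis using False by blast
next
  case nz: True
  let ?G = "gs k (ebasis k @ L)"
  define F where "F = {s. s < k \<and> nrm2 k (?G ! s) \<noteq> 0}"
  define f where "f s = fn k (?G ! s)" for s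
  define W where "W = lconst n k B"
  define r where "r = 2*k*n"
  define Dm where "Dm = 2*n*(k-d)"
  define S where "S = F \<times> ({..<n} \<times> (UNIV :: bool set))"
  define w where "w = (\<lambda>(s, i, p) t. (if p then Re else Im) (ip k (rowv k (B t) i) (f s)))"
  have finF: "finite F" unfolding F_def by simp
  have cF: "card F \<le> k - d" using fs_count[OF nz] lenL unfolding F_def by simp
  have finS: "finite S" unfolding S_def using finF by simp
  have cS: "card S \<le> Dm"
  proof -
    have "card S = card F * (n * 2)" unfolding S_def using finF by (simp add: card_cartesian_product)
    also have "\<dots> \<le> (k - d) * (n * 2)" using cF by simp
    finally show ?thesis unfolding Dm_def by (simp add: algebra_simps)
  qed
  have Dm1: "Dm \<ge> 1" unfolding Dm_def using n dk by simp
  have r1: "r \<ge> 1" unfolding r_def using n dk by simp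
  have W0: "W > 0" unfolding W_def by (rule lconst_pos)
  have wb: "(\<Sum>t\<in>{1..r}. \<bar>w s t\<bar>) \<le> W" if s: "s \<in> S" for s
  proof -
    obtain s0 i p where s3: "s = (s0, i, p)" by (cases s) auto
    have s0: "s0 \<in> F" and i: "i < n" using s s3 unfolding S_def by auto
    have "(\<Sum>t\<in>{1..r}. \<bar>w s t\<bar>) \<le> (\<Sum>t\<in>{1..r}. \<Sum>a<n. \<Sum>c<k. cmod (B t $$ (a, c)))"
    proof (rule sum_mono)
      fix t assume "t \<in> {1..r}"
      have "\<bar>w s t\<bar> \<le> cmod (ip k (rowv k (B t) i) (f s0))"
        unfolding s3 w_def by (auto simp: abs_Re_le_cmod abs_Im_le_cmod)
      also have "\<dots> \<le> (\<Sum>c<k. cmod (B t $$ (i, c)))"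
        unfolding f_def by (rule ip_row_bound) (use s0 in \<open>simp add: F_def\<close>)
      also have "\<dots> \<le> (\<Sum>a<n. \<Sum>c<k. cmod (B t $$ (a, c)))"
        using i by (intro member_le_sum[where f = "\<lambda>a. \<Sum>c<k. cmod (B t $$ (a, c))"]) (auto intro: sum_nonneg)
      finally show "\<bar>w s t\<bar> \<le> (\<Sum>a<n. \<Sum>c<k. cmod (B t $$ (a, c)))" .
    qed
    also have "\<dots> \<le> W" unfolding W_def lconst_def r_def by simp
    finally show ?thesis .
  qed
  obtain b where bb: "\<forall>i\<in>{1..r}. - int N \<le> b i \<and> b i \<le> int N" and bnz: "\<exists>i\<in>{1..r}. b i \<noteq> 0"
    and bs: "\<forall>s\<in>S. \<bar>\<Sum>t\<in>{1..r}. of_int (b t) * w s t\<bar> \<le> 4 * N * W * N powr (- (r / Dm))"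
    using dirichlet[OF finS cS Dm1 N r1 W0, where w = w, OF wb] by blast
  define X where "X = lat_comb n k r B b"
  define \<delta> where "\<delta> = 4 * real N * W * real N powr (- (real r / real Dm))"
  have XT: "X \<in> trunc_lattice n k B N - {0\<^sub>m n k}"
    using lat_in_trunc[of k n N b B] lat_nonzero[OF B, of b] bb bnz unfolding X_def r_def by auto
  have dimX: "dim_row X = n" unfolding X_def lat_comb_def by simp
  have cm: "(cmod (ip k (mrows k X ! i) (f s)))^2 \<le> 2 * \<delta>^2" if i: "i < n" and s: "s \<in> F" for i s
  proof -
    define z where "z = ip k (mrows k X ! i) (f s)"
    have z: "z = (\<Sum>t\<in>{1..r}. of_int (b t) * ip k (rowv k (B t) i) (f s))"
      unfolding z_def using i dimX ip_lat_row[OF i] unfolding X_def by simp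
    have ST: "(s, i, True) \<in> S" "(s, i, False) \<in> S" using s i unfolding S_def by auto
    have Rz: "Re z = (\<Sum>t\<in>{1..r}. of_int (b t) * w (s, i, True) t)"
      unfolding z w_def by (simp add: Re_sum)
    have Iz: "Im z = (\<Sum>t\<in>{1..r}. of_int (b t) * w (s, i, False) t)"
      unfolding z w_def by (simp add: Im_sum)
    have R: "\<bar>Re z\<bar> \<le> \<delta>" using bs ST(1) unfolding \<delta>_def Rz by simp
    have I: "\<bar>Im z\<bar> \<le> \<delta>" using bs ST(2) unfolding \<delta>_def Iz by simp
    have "\<bar>Re z\<bar>^2 \<le> \<delta>^2" by (rule power_mono[OF R]) simp
    moreover have "\<bar>Im z\<bar>^2 \<le> \<delta>^2" by (rule power_mono[OF I]) simp
    ultimately have "(Re z)^2 \<le> \<delta>^2" "(Im z)^2 \<le> \<delta>^2" by simp_all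
    then show ?thesis unfolding z_def[symmetric] cmod_power2 by simp
  qed
  have rb: "nrm2 k (gs k (mrows k X @ L) ! i) \<le> 2 * real k * \<delta>^2" if i: "i < n" for i
  proof -
    have "nrm2 k (gs k (mrows k X @ L) ! i) \<le> (\<Sum>s\<in>F. (cmod (ip k (mrows k X ! i) (f s)))^2)"
      unfolding F_def f_def by (rule row_bound[OF vkL vk_mrows]) (simp add: dimX i)
    also have "\<dots> \<le> (\<Sum>s\<in>F. 2 * \<delta>^2)" by (rule sum_mono) (rule cm[OF i])
    also have "\<dots> = real (card F) * (2 * \<delta>^2)" by simp
    also have "\<dots> \<le> real k * (2 * \<delta>^2)" using cF by (intro mult_right_mono) auto
    finally show ?thesis by simp
  qed
  have "(\<Prod>i<n. nrm2 k (gs k (mrows k X @ L) ! i)) \<le> (\<Prod>i<n. 2 * real k * \<delta>^2)"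
    by (rule prod_mono) (auto simp: nrm2_nonneg rb)
  also have "\<dots> = (2 * real k * \<delta>^2) ^ n" by simp
  also have "\<dots> = (32 * real k * W^2) ^ n * real N powr (- (2 * real n * real d) / (real k - real d))"
    unfolding \<delta>_def r_def Dm_def by (rule const_calc[OF N dk n])
  finally show ?thesis using XT unfolding W_def by blast
qed



lemma mult_entry:
  assumes "i < dim_row A" "j < dim_col B" "dim_col A = dim_row B"
  shows "(A * B) $$ (i,j) = (\<Sum>l<dim_col A. A $$ (i,l) * B $$ (l,j))"
  using assms by (simp add: scalar_prod_def lessThan_atLeast0)

lemma ctrans_carrier: "A \<in> carrier_mat n m \<Longrightarrow> ctrans A \<in> carrier_mat m n"
  unfolding ctrans_def by auto

lemma ctrans_index: "i < dim_col A \<Longrightarrow> j < dim_row A \<Longrightarrow> ctrans A $$ (i,j) = cnj (A $$ (j,i))"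
  unfolding ctrans_def by simp

lemma ctrans_mult:
  assumes A: "A \<in> carrier_mat n m" and B: "B \<in> carrier_mat m p"
  shows "ctrans (A * B) = ctrans B * ctrans A"
proof (rule eq_matI)
  show "dim_row (ctrans (A * B)) = dim_row (ctrans B * ctrans A)"
    "dim_col (ctrans (A * B)) = dim_col (ctrans B * ctrans A)"
    using A B by (simp_all add: ctrans_def)
  fix i j assume i: "i < dim_row (ctrans B * ctrans A)" and j: "j < dim_col (ctrans B * ctrans A)"
  have i': "i < p" and j': "j < n" using i j A B by (simp_all add: ctrans_def)
  show "ctrans (A * B) $$ (i, j) = (ctrans B * ctrans A) $$ (i, j)"
    using A B i' j' by (simp add: ctrans_def scalar_prod_def cnj_sum mult.commute)
qed

lemma gs_decomp: "t < length rs \<Longrightarrow> (rs!t) c = (\<Sum>j<length rs. (if j = t then 1 else if t < j then coef k (rs!t) (gs k rs!j) else 0) * (gs k rs ! j) c)"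
proof -
  assume t: "t < length rs"
  let ?G = "gs k rs"
  define \<alpha> where "\<alpha> j = (if j = t then 1 else if t < j then coef k (rs!t) (?G!j) else 0)" for j
  have disj: "{t<..<length rs} \<inter> {..<t} = {}" by auto
  have "{..<length rs} = insert t ({t<..<length rs} \<union> {..<t})" using t by auto
  then have "(\<Sum>j<length rs. \<alpha> j * (?G ! j) c) = \<alpha> t * (?G!t) c + ((\<Sum>j\<in>{t<..<length rs}. \<alpha> j * (?G ! j) c) + (\<Sum>j\<in>{..<t}. \<alpha> j * (?G ! j) c))"
    by (simp add: sum.union_disjoint disj)
  also have "\<dots> = (?G!t) c + (\<Sum>j\<in>{t<..<length rs}. coef k (rs!t) (?G!j) * (?G ! j) c)"
    by (simp add: \<alpha>_def)
  also have "\<dots> = (rs!t) c" using gs_nth[OF t, of k] by simp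
  finally show ?thesis unfolding \<alpha>_def by simp
qed

lemma gram_det:
  assumes M: "M \<in> carrier_mat m k"
  shows "det (M * ctrans M) = of_real (\<Prod>a<m. nrm2 k (gs k (mrows k M) ! a))"
proof -
  let ?rs = "mrows k M"
  let ?G = "gs k ?rs"
  have len: "length ?rs = m" using M by simp
  define Q where "Q = mat m k (\<lambda>(a,c). (?G!a) c)"
  define T where "T = mat m m (\<lambda>(a,b). if a = b then 1 else if a < b then coef k (?rs!a) (?G!b) else 0)"
  have Q: "Q \<in> carrier_mat m k" and T: "T \<in> carrier_mat m m" unfolding Q_def T_def by auto
  have MTQ: "M = T * Q"
  proof (rule eq_matI)
    fix a c assume a: "a < dim_row (T * Q)" and c: "c < dim_col (T * Q)"
    have a': "a < m" and c': "c < k" using a c Q T by auto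
    have "(T * Q) $$ (a, c) = (\<Sum>j<m. T $$ (a,j) * Q $$ (j,c))"
      using Q T a' c' by (subst mult_entry) auto
    also have "\<dots> = (?rs!a) c"
      using gs_decomp[of a ?rs c k] a' c' len unfolding T_def Q_def by (auto intro!: sum.cong)
    also have "\<dots> = M $$ (a, c)" using a' c' M by (simp add: rowv_def)
    finally show "M $$ (a, c) = (T * Q) $$ (a, c)" ..
  qed (use M Q T in auto)
  define D where "D = Q * ctrans Q"
  have D: "D \<in> carrier_mat m m" unfolding D_def using Q ctrans_carrier[OF Q] by simp
  have Dent: "D $$ (a,b) = (if a = b then of_real (nrm2 k (?G!a)) else 0)" if "a < m" "b < m" for a b
  proof -
    have "D $$ (a,b) = (\<Sum>l<k. Q $$ (a,l) * ctrans Q $$ (l,b))"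
      unfolding D_def using that Q ctrans_carrier[OF Q] by (subst mult_entry) auto
    also have "\<dots> = ip k (?G!a) (?G!b)"
      unfolding ip_def using that Q by (auto intro!: sum.cong simp: ctrans_index Q_def)
    also have "\<dots> = (if a = b then of_real (nrm2 k (?G!a)) else 0)"
      using gs_orth[of a ?rs b k] that len by (simp add: ip_self)
    finally show ?thesis .
  qed
  have QQ: "Q * ctrans Q \<in> carrier_mat m m" using Q ctrans_carrier[OF Q] by simp
  have "M * ctrans M = T * Q * (ctrans Q * ctrans T)"
    unfolding MTQ ctrans_mult[OF T Q] ..
  also have "\<dots> = T * (Q * (ctrans Q * ctrans T))"
    by (rule assoc_mult_mat[OF T Q, of _ m]) (use Q T ctrans_carrier[OF Q] ctrans_carrier[OF T] in simp)
  also have "Q * (ctrans Q * ctrans T) = Q * ctrans Q * ctrans T"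
    by (rule assoc_mult_mat[OF Q ctrans_carrier[OF Q] ctrans_carrier[OF T], symmetric])
  also have "T * (Q * ctrans Q * ctrans T) = T * D * ctrans T"
    unfolding D_def by (rule assoc_mult_mat[OF T QQ ctrans_carrier[OF T], symmetric])
  also have "det \<dots> = det T * det D * det (ctrans T)"
    using T D ctrans_carrier[OF T] by (simp add: det_mult[of _ m])
  also have "det T = 1"
  proof -
    have "upper_triangular T" unfolding upper_triangular_def T_def by auto
    then have "det T = prod_list (diag_mat T)" by (rule det_upper_triangular[OF _ T])
    also have "\<dots> = 1" unfolding prod_list_diag_prod using T by (simp add: T_def)
    finally show ?thesis .
  qed
  also have "det (ctrans T) = 1"
  proof -
    have "det (ctrans T) = prod_list (diag_mat (ctrans T))"
      by (rule det_lower_triangular[OF _ ctrans_carrier[OF T]]) (use T in \<open>simp add: ctrans_def T_def\<close>)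
    also have "\<dots> = 1" unfolding prod_list_diag_prod using T by (simp add: T_def ctrans_def)
    finally show ?thesis .
  qed
  also have "det D = of_real (\<Prod>a<m. nrm2 k (?G!a))"
  proof -
    have "upper_triangular D" unfolding upper_triangular_def using D Dent by auto
    then have "det D = prod_list (diag_mat D)" by (rule det_upper_triangular[OF _ D])
    also have "\<dots> = (\<Prod>a<m. of_real (nrm2 k (?G!a)))"
      unfolding prod_list_diag_prod using D Dent by (simp add: lessThan_atLeast0)
    finally show ?thesis by simp
  qed
  finally show ?thesis by simp
qed



lemma stack_restrict:
  assumes n: "n \<ge> 1"
  shows "stack U n k (restrict X {1..U}) = stack U n k X"
proof -
  have "a div n + 1 \<in> {1..U}" if "a < U * n" for a
    using that n by (auto simp: less_mult_imp_div_less Suc_leI)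
  then show ?thesis unfolding stack_def by (intro eq_matI) auto
qed

lemma trunc_finite: "finite (trunc_lattice n k B N)"
proof -
  let ?r = "2*k*n"
  have "trunc_lattice n k B N \<subseteq> (\<lambda>b. lat_comb n k ?r B b) ` PiE {1..?r} (\<lambda>_. {- int N..int N})"
  proof
    fix X assume "X \<in> trunc_lattice n k B N"
    then obtain b where X: "X = lat_comb n k ?r B b" and b: "\<forall>i\<in>{1..?r}. - int N \<le> b i \<and> b i \<le> int N"
      unfolding trunc_lattice_def by blast
    have "lat_comb n k ?r B b = lat_comb n k ?r B (restrict b {1..?r})"
      unfolding lat_comb_def by (intro eq_matI) auto
    moreover have "restrict b {1..?r} \<in> PiE {1..?r} (\<lambda>_. {- int N..int N})" using b by auto
    ultimately show "X \<in> (\<lambda>b. lat_comb n k ?r B b) ` PiE {1..?r} (\<lambda>_. {- int N..int N})"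
      unfolding X by blast
  qed
  then show ?thesis by (rule finite_subset) (auto intro: finite_PiE)
qed

lemma decay_le:
  assumes n: "n \<ge> 1" and X: "\<forall>j\<in>{1..U}. X j \<in> trunc_lattice n k (B j) (N j) - {0\<^sub>m n k}"
  shows "decay U n k B N \<le> Re (det (stack U n k X * ctrans (stack U n k X)))"
proof -
  let ?f = "\<lambda>X. Re (det (stack U n k X * ctrans (stack U n k X)))"
  let ?S = "{?f X | X. \<forall>j\<in>{1..U}. X j \<in> trunc_lattice n k (B j) (N j) - {0\<^sub>m n k}}"
  have "?S \<subseteq> ?f ` PiE {1..U} (\<lambda>j. trunc_lattice n k (B j) (N j) - {0\<^sub>m n k})"
  proof
    fix y assume "y \<in> ?S"
    then obtain Y where y: "y = ?f Y" and Y: "\<forall>j\<in>{1..U}. Y j \<in> trunc_lattice n k (B j) (N j) - {0\<^sub>m n k}" by blast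
    have "y = ?f (restrict Y {1..U})" unfolding y stack_restrict[OF n] ..
    moreover have "restrict Y {1..U} \<in> PiE {1..U} (\<lambda>j. trunc_lattice n k (B j) (N j) - {0\<^sub>m n k})" using Y by auto
    ultimately show "y \<in> ?f ` PiE {1..U} (\<lambda>j. trunc_lattice n k (B j) (N j) - {0\<^sub>m n k})" by blast
  qed
  moreover have "finite (?f ` PiE {1..U} (\<lambda>j. trunc_lattice n k (B j) (N j) - {0\<^sub>m n k}))"
    by (intro finite_imageI finite_PiE) (auto simp: trunc_finite)
  ultimately have "finite ?S" by (rule finite_subset)
  moreover have "?f X \<in> ?S" using X by blast
  ultimately show ?thesis unfolding decay_def by (rule Min_le)
qed

lemma prod_split_add: "(\<Prod>j<(k::nat)+d. f j) = (\<Prod>j<k. f j) * (\<Prod>j<d. (f (k+j) :: 'a :: comm_monoid_mult))"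
  by (induction d) (simp_all add: mult.assoc)

lemma prod_blocks: "(\<Prod>a<(U::nat)*n. f a) = (\<Prod>l<U. \<Prod>i<n. (f (l*n + i) :: 'a :: comm_monoid_mult))"
proof (induction U)
  case 0 then show ?case by simp
next
  case (Suc U)
  have "(\<Prod>a<Suc U*n. f a) = (\<Prod>a<U*n + n. f a)" by (simp add: add.commute)
  also have "\<dots> = (\<Prod>a<U*n. f a) * (\<Prod>i<n. f (U*n + i))" by (rule prod_split_add)
  finally show ?case using Suc by simp
qed



lemma trunc_carrier: "X \<in> trunc_lattice n k B N \<Longrightarrow> X \<in> carrier_mat n k"
  unfolding trunc_lattice_def lat_comb_def by auto

lemma main_bound:
  fixes U n k :: nat and B :: "nat \<Rightarrow> nat \<Rightarrow> complex mat" and N :: "nat \<Rightarrow> nat"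
  assumes U: "U \<ge> 1" and n: "n \<ge> 1" and k: "k \<ge> U*n" and Bb: "\<forall>j\<in>{1..U}. full_rank_lattice_basis n k (B j)"
    and N: "\<forall>j\<in>{1..U}. N j \<ge> 1"
  shows "decay U n k B N \<le> (\<Prod>j\<in>{1..U}. (32 * real k * (lconst n k (B j))^2)^n) *
     (\<Prod>l\<in>{1..U}. real (N l) powr (- (2 * real n * real (n*(U-l))) / (real k - real (n*(U-l)))))"
proof -
  define C where "C j = (32 * real k * (lconst n k (B j))^2)^n" for j
  define E where "E l = real (N l) powr (- (2 * real n * real (n*(U-l))) / (real k - real (n*(U-l))))" for l
  define P where "P l L X \<longleftrightarrow> (l \<in> {1..U} \<and> (\<forall>x\<in>set L. vk k x) \<and> length L = n*(U-l)) \<longrightarrow>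
      X \<in> trunc_lattice n k (B l) (N l) - {0\<^sub>m n k} \<and>
      ((\<forall>q\<in>set (gs k L). nrm2 k q \<noteq> 0) \<longrightarrow> (\<Prod>i<n. nrm2 k (gs k (mrows k X @ L) ! i)) \<le> C l * E l)"
    for l L X
  have ex: "\<forall>p. \<exists>X. P (fst p) (snd p) X"
  proof
    fix p :: "nat \<times> (nat \<Rightarrow> complex) list"
    obtain l L where p: "p = (l, L)" by (cases p) auto
    show "\<exists>X. P (fst p) (snd p) X"
    proof (cases "l \<in> {1..U} \<and> (\<forall>x\<in>set L. vk k x) \<and> length L = n*(U-l)")
      case True
      have a1: "n*(U-l) < n*U" using True n by auto
      have a2: "n*U \<le> k" using k by (simp add: mult.commute)
      have dk: "n*(U-l) < k" using a1 a2 by (rule less_le_trans)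
      have Nl: "N l \<ge> 1" using N True by auto
      have Bl: "full_rank_lattice_basis n k (B l)" using Bb True by auto
      from block_choice[OF n dk Nl Bl, of L] True
      obtain X where "X \<in> trunc_lattice n k (B l) (N l) - {0\<^sub>m n k}"
        "(\<forall>q\<in>set (gs k L). nrm2 k q \<noteq> 0) \<longrightarrow> (\<Prod>i<n. nrm2 k (gs k (mrows k X @ L) ! i)) \<le> C l * E l"
        unfolding C_def E_def by blast
      then show ?thesis unfolding P_def p by auto
    qed (auto simp: P_def p)
  qed
  from choice[OF ex] obtain g where g: "\<forall>p. P (fst p) (snd p) (g p)" ..
  define h where "h l L = g (l, L)" for l L
  have h: "h l L \<in> trunc_lattice n k (B l) (N l) - {0\<^sub>m n k} \<and>
      ((\<forall>q\<in>set (gs k L). nrm2 k q \<noteq> 0) \<longrightarrow> (\<Prod>i<n. nrm2 k (gs k (mrows k (h l L) @ L) ! i)) \<le> C l * E l)"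
    if "l \<in> {1..U}" "\<forall>x\<in>set L. vk k x" "length L = n*(U-l)" for l L
    using g[rule_format, of "(l, L)"] that unfolding P_def h_def by auto
  define R where "R = rec_nat [] (\<lambda>j Rj. mrows k (h (U - j) Rj) @ Rj)"
  have R0: "R 0 = []" unfolding R_def by simp
  have RS: "R (Suc j) = mrows k (h (U-j) (R j)) @ R j" for j unfolding R_def by simp
  have inv: "length (R j) = n*j \<and> (\<forall>x\<in>set (R j). vk k x)" if "j \<le> U" for j
    using that
  proof (induction j)
    case 0 then show ?case by (simp add: R0)
  next
    case (Suc j)
    then have IH: "length (R j) = n*j" "\<forall>x\<in>set (R j). vk k x" by auto
    have l: "U - j \<in> {1..U}" using Suc.prems by auto
    have "length (R j) = n * (U - (U - j))" using IH Suc.prems by simp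
    then have "h (U-j) (R j) \<in> trunc_lattice n k (B (U-j)) (N (U-j))" using h[OF l IH(2)] by auto
    then have "dim_row (h (U-j) (R j)) = n" using trunc_carrier by blast
    then show ?case unfolding RS using IH vk_mrows by auto
  qed
  define X where "X l = h l (R (U - l))" for l
  have hX: "X l \<in> trunc_lattice n k (B l) (N l) - {0\<^sub>m n k} \<and>
      ((\<forall>q\<in>set (gs k (R (U-l))). nrm2 k q \<noteq> 0) \<longrightarrow> (\<Prod>i<n. nrm2 k (gs k (mrows k (X l) @ R (U-l)) ! i)) \<le> C l * E l)"
    if l: "l \<in> {1..U}" for l
  proof -
    have "U - l \<le> U" by simp
    from inv[OF this] show ?thesis unfolding X_def using h[OF l] by auto
  qed
  have dimX: "dim_row (X l) = n" if "l \<in> {1..U}" for l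
    using hX[OF that] trunc_carrier by blast
  have RX: "R (U - l') = mrows k (X (Suc l')) @ R (U - Suc l')" if "l' < U" for l'
  proof -
    have "U - l' = Suc (U - Suc l')" using that by simp
    moreover have "U - (U - Suc l') = Suc l'" using that by simp
    ultimately show ?thesis unfolding X_def using RS[of "U - Suc l'"] by simp
  qed
  have Rdrop: "drop (n*t) (R U) = R (U - t)" if "t \<le> U" for t
    using that
  proof (induction t)
    case 0 then show ?case by simp
  next
    case (Suc t)
    have "drop (n * Suc t) (R U) = drop n (drop (n*t) (R U))" by (simp add: add.commute)
    also have "\<dots> = drop n (R (U - t))" using Suc by simp
    also have "\<dots> = R (U - Suc t)"
      using RX[of t] Suc.prems dimX[of "Suc t"] by simp
    finally show ?case .
  qed
  have Rnth: "R j ! t = rowv k (X (U - j + 1 + t div n)) (t mod n)" if "j \<le> U" "t < n*j" for j t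
    using that
  proof (induction j arbitrary: t)
    case 0 then show ?case by simp
  next
    case (Suc j)
    have l: "U - j \<in> {1..U}" using Suc.prems by auto
    have XU: "X (U - j) = h (U - j) (R j)" unfolding X_def using Suc.prems by simp
    have dimh: "dim_row (h (U - j) (R j)) = n" using dimX[OF l] XU by simp
    have lenm: "length (mrows k (h (U - j) (R j))) = n" using dimh by simp
    show ?case
    proof (cases "t < n")
      case True
      have eqU: "Suc (U - Suc j) = U - j" using Suc.prems by simp
      show ?thesis unfolding RS using True dimh XU Suc.prems by (simp add: nth_append eqU)
    next
      case False
      then have "R (Suc j) ! t = R j ! (t - n)" unfolding RS using lenm by (simp add: nth_append)
      also have "\<dots> = rowv k (X (U - j + 1 + (t - n) div n)) ((t - n) mod n)"
        using Suc.IH[of "t - n"] Suc.prems False by auto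
      also have tdiv: "t div n = Suc ((t - n) div n)" using False n by (intro le_div_geq) auto
      then have "(t - n) div n = t div n - 1" by simp
      also have "(t - n) mod n = t mod n" using False n by (simp add: le_mod_geq)
      also have "U - j + 1 + (t div n - 1) = U - Suc j + 1 + t div n"
        using tdiv Suc.prems by simp
      finally show ?thesis .
    qed
  qed
  define M where "M = stack U n k X"
  have Mc: "M \<in> carrier_mat (U*n) k" unfolding M_def stack_def by auto
  have lenRU: "length (R U) = U*n" using inv[of U] by (simp add: mult.commute)
  have mrM: "mrows k M = R U"
  proof (rule nth_equalityI)
    show "length (mrows k M) = length (R U)" using Mc lenRU by simp
    fix a assume a: "a < length (mrows k M)"
    then have a': "a < U*n" using Mc by simp
    have "R U ! a = rowv k (X (1 + a div n)) (a mod n)" using Rnth[of U a] a' by (simp add: mult.commute)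
    also have "\<dots> = rowv k M a"
      unfolding rowv_def M_def stack_def using a' by (auto simp: add.commute)
    finally show "mrows k M ! a = R U ! a" using a' Mc by simp
  qed
  have det: "Re (det (M * ctrans M)) = (\<Prod>a<U*n. nrm2 k (gs k (R U) ! a))"
    unfolding gram_det[OF Mc] mrM by (simp only: Re_complex_of_real)
  have blk: "gs k (R U) ! (l'*n + i) = gs k (mrows k (X (Suc l')) @ R (U - Suc l')) ! i" if "l' < U" "i < n" for l' i
  proof -
    have b1: "l'*n + i < Suc l' * n" using that by simp
    have b2: "Suc l' * n \<le> U * n" using that by (intro mult_le_mono1) simp
    have "l'*n + i < U*n" using b1 b2 by (rule less_le_trans)
    then have "gs k (R U) ! (n*l' + i) = gs k (drop (n*l') (R U)) ! i"
      using lenRU by (intro gs_nth_drop) (simp add: mult.commute)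
    then show ?thesis using Rdrop[of l'] RX[of l'] that by (simp add: mult.commute)
  qed
  have Cnn: "C j \<ge> 0" for j unfolding C_def using lconst_pos[of n k "B j"] by simp
  have Enn: "E l \<ge> 0" for l unfolding E_def by simp
  have "Re (det (M * ctrans M)) \<le> (\<Prod>j\<in>{1..U}. C j) * (\<Prod>l\<in>{1..U}. E l)"
  proof (cases "\<forall>q\<in>set (gs k (R U)). nrm2 k q \<noteq> 0")
    case True
    have "Re (det (M * ctrans M)) = (\<Prod>l'<U. \<Prod>i<n. nrm2 k (gs k (R U) ! (l'*n + i)))"
      unfolding det by (rule prod_blocks)
    also have "\<dots> = (\<Prod>l'<U. \<Prod>i<n. nrm2 k (gs k (mrows k (X (Suc l')) @ R (U - Suc l')) ! i))"
      by (auto intro!: prod.cong simp: blk)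
    also have "\<dots> \<le> (\<Prod>l'<U. C (Suc l') * E (Suc l'))"
    proof (rule prod_mono)
      fix l' assume l': "l' \<in> {..<U}"
      have l: "Suc l' \<in> {1..U}" using l' by auto
      have "gs k (R (U - Suc l')) = drop (n * Suc l') (gs k (R U))"
        using Rdrop[of "Suc l'"] l' by (simp add: gs_drop)
      then have "set (gs k (R (U - Suc l'))) \<subseteq> set (gs k (R U))" by (simp add: set_drop_subset)
      then have nz: "\<forall>q\<in>set (gs k (R (U - Suc l'))). nrm2 k q \<noteq> 0" using True by blast
      show "0 \<le> (\<Prod>i<n. nrm2 k (gs k (mrows k (X (Suc l')) @ R (U - Suc l')) ! i)) \<and>
          (\<Prod>i<n. nrm2 k (gs k (mrows k (X (Suc l')) @ R (U - Suc l')) ! i)) \<le> C (Suc l') * E (Suc l')"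
        using hX[OF l] nz by (auto intro: prod_nonneg nrm2_nonneg)
    qed
    also have "\<dots> = (\<Prod>j\<in>{1..U}. C j) * (\<Prod>l\<in>{1..U}. E l)"
      unfolding prod.distrib One_nat_def prod.atLeast1_atMost_eq ..
    finally show ?thesis .
  next
    case False
    then obtain q where q: "q \<in> set (gs k (R U))" "nrm2 k q = 0" by blast
    then obtain a where a: "a < length (gs k (R U))" "gs k (R U) ! a = q" by (auto simp: in_set_conv_nth)
    then have a': "a < U*n" using lenRU by simp
    have "Re (det (M * ctrans M)) = 0" unfolding det using a a' q by (intro prod_zero) auto
    then show ?thesis using Cnn Enn by (simp add: prod_nonneg)
  qed
  moreover have "decay U n k B N \<le> Re (det (M * ctrans M))"
    unfolding M_def by (rule decay_le[OF n]) (use hX in \<open>intro ballI, rule conjunct1\<close>)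
  ultimately show ?thesis unfolding C_def E_def by linarith
qed


theorem theorem2p3:
  fixes U n k :: nat and B :: "nat \<Rightarrow> nat \<Rightarrow> complex mat"
  assumes "U \<ge> 1" and "n \<ge> 1" and "k \<ge> U * n"
    and "\<forall>j\<in>{1..U}. full_rank_lattice_basis n k (B j)"
  shows "\<exists>K>0.
    (\<forall>N :: nat \<Rightarrow> nat. (\<forall>j\<in>{1..U}. N j \<ge> 1) \<longrightarrow>
       decay U n k B N \<le> K * (\<Prod>l\<in>{1..U-1}.
          real (N l) powr (- (2 * real n ^ 2 * real (U - l)) / (real k - real n * real (U - l)))))
    \<and> (\<forall>N :: nat. N \<ge> 1 \<longrightarrow>
       decay U n k B (\<lambda>_. N) \<le> K / real N powr
          (\<Sum>l\<in>{1..U-1}. (2 * real n ^ 2 * real (U - l)) / (real k - real n * real (U - l))))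
    \<and> (k = U * n \<longrightarrow>
        (\<forall>N :: nat \<Rightarrow> nat. (\<forall>j\<in>{1..U}. N j \<ge> 1) \<longrightarrow>
           decay U n k B N \<le> K * (\<Prod>l\<in>{1..U-1}.
              real (N l) powr (- (2 * real n * real (U - l)) / real l)))
        \<and> (\<forall>N :: nat. N \<ge> 1 \<longrightarrow>
           decay U n k B (\<lambda>_. N) \<le> K / real N powr
              (\<Sum>l\<in>{1..U-1}. (2 * real n * real (U - l)) / real l)))"
proof -
  note U = assms(1) and n = assms(2) and k = assms(3) and Bb = assms(4)
  define K where "K = (\<Prod>j\<in>{1..U}. (32 * real k * (lconst n k (B j))^2)^n)"
  have k1: "k \<ge> 1" using U n k by (metis le_trans nat_mult_1 mult_le_mono)
  have cpos: "(32 * real k * (lconst n k (B j))^2)^n > 0" for j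
  proof -
    have "lconst n k (B j) > 0" by (rule lconst_pos)
    then have "32 * real k * (lconst n k (B j))^2 > 0" using k1 by simp
    then show ?thesis by (rule zero_less_power)
  qed
  have Kpos: "K > 0" unfolding K_def using cpos by (intro prod_pos) auto
  have P1: "\<forall>N :: nat \<Rightarrow> nat. (\<forall>j\<in>{1..U}. N j \<ge> 1) \<longrightarrow>
       decay U n k B N \<le> K * (\<Prod>l\<in>{1..U-1}.
          real (N l) powr (- (2 * real n ^ 2 * real (U - l)) / (real k - real n * real (U - l))))"
  proof (intro allI impI)
    fix N :: "nat \<Rightarrow> nat" assume N: "\<forall>j\<in>{1..U}. N j \<ge> 1"
    have "decay U n k B N \<le> K * (\<Prod>l\<in>{1..U}. real (N l) powr (- (2 * real n * real (n*(U-l))) / (real k - real (n*(U-l)))))"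
      unfolding K_def by (rule main_bound[OF U n k Bb N])
    also have "(\<Prod>l\<in>{1..U}. real (N l) powr (- (2 * real n * real (n*(U-l))) / (real k - real (n*(U-l)))))
        = (\<Prod>l\<in>{1..U}. real (N l) powr (- (2 * real n ^ 2 * real (U - l)) / (real k - real n * real (U - l))))"
      by (intro prod.cong refl) (simp add: power2_eq_square mult.assoc)
    also have "{1..U} = insert U {1..U-1}" using U by auto
    also have "(\<Prod>l\<in>insert U {1..U-1}. real (N l) powr (- (2 * real n ^ 2 * real (U - l)) / (real k - real n * real (U - l))))
        = real (N U) powr (- (2 * real n ^ 2 * real (U - U)) / (real k - real n * real (U - U))) *
          (\<Prod>l\<in>{1..U-1}. real (N l) powr (- (2 * real n ^ 2 * real (U - l)) / (real k - real n * real (U - l))))"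
      using U by (subst prod.insert) auto
    also have "real (N U) powr (- (2 * real n ^ 2 * real (U - U)) / (real k - real n * real (U - U))) = 1"
    proof -
      have "N U \<ge> 1" using N U by auto
      then show ?thesis by simp
    qed
    finally show "decay U n k B N \<le> K * (\<Prod>l\<in>{1..U-1}.
          real (N l) powr (- (2 * real n ^ 2 * real (U - l)) / (real k - real n * real (U - l))))" by simp
  qed
  have prodpow: "(\<Prod>l\<in>{1..U-1}. real N powr (- a l / b l)) = 1 / real N powr (\<Sum>l\<in>{1..U-1}. a l / b l)"
    if "N \<ge> 1" for N :: nat and a b :: "nat \<Rightarrow> real"
  proof -
    have "(\<Prod>l\<in>{1..U-1}. real N powr (- a l / b l)) = real N powr (\<Sum>l\<in>{1..U-1}. - a l / b l)"
      using that by (subst powr_sum) auto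
    also have "(\<Sum>l\<in>{1..U-1}. - a l / b l) = - (\<Sum>l\<in>{1..U-1}. a l / b l)"
      by (simp add: sum_negf[symmetric])
    finally show ?thesis by (simp add: powr_minus_divide)
  qed
  have P2: "\<forall>N :: nat. N \<ge> 1 \<longrightarrow>
       decay U n k B (\<lambda>_. N) \<le> K / real N powr
          (\<Sum>l\<in>{1..U-1}. (2 * real n ^ 2 * real (U - l)) / (real k - real n * real (U - l)))"
  proof (intro allI impI)
    fix N :: nat assume N: "N \<ge> 1"
    have "decay U n k B (\<lambda>_. N) \<le> K * (\<Prod>l\<in>{1..U-1}.
          real N powr (- (2 * real n ^ 2 * real (U - l)) / (real k - real n * real (U - l))))"
      using P1 N by auto
    also have "\<dots> = K / real N powr (\<Sum>l\<in>{1..U-1}. (2 * real n ^ 2 * real (U - l)) / (real k - real n * real (U - l)))"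
      unfolding prodpow[OF N] by simp
    finally show "decay U n k B (\<lambda>_. N) \<le> K / real N powr
          (\<Sum>l\<in>{1..U-1}. (2 * real n ^ 2 * real (U - l)) / (real k - real n * real (U - l)))" .
  qed
  have expeq: "(2 * real n ^ 2 * real (U - l)) / (real k - real n * real (U - l)) = (2 * real n * real (U - l)) / real l"
    if kU: "k = U * n" and l: "l \<in> {1..U-1}" for l
  proof -
    have lU: "l \<le> U" using l by auto
    have "real (U - l) = real U - real l" using lU by (simp add: of_nat_diff)
    then have "real k - real n * real (U - l) = real n * real l"
      using kU by (simp add: algebra_simps)
    then show ?thesis using n l by (simp add: power2_eq_square field_simps)
  qed
  have P34: "k = U * n \<longrightarrow>
        (\<forall>N :: nat \<Rightarrow> nat. (\<forall>j\<in>{1..U}. N j \<ge> 1) \<longrightarrow>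
           decay U n k B N \<le> K * (\<Prod>l\<in>{1..U-1}.
              real (N l) powr (- (2 * real n * real (U - l)) / real l)))
        \<and> (\<forall>N :: nat. N \<ge> 1 \<longrightarrow>
           decay U n k B (\<lambda>_. N) \<le> K / real N powr
              (\<Sum>l\<in>{1..U-1}. (2 * real n * real (U - l)) / real l))"
  proof
    assume kU: "k = U * n"
    have e1: "(\<Prod>l\<in>{1..U-1}. real (N l) powr (- (2 * real n ^ 2 * real (U - l)) / (real k - real n * real (U - l))))
        = (\<Prod>l\<in>{1..U-1}. real (N l) powr (- (2 * real n * real (U - l)) / real l))" for N :: "nat \<Rightarrow> nat"
    proof (rule prod.cong[OF refl])
      fix l assume l: "l \<in> {1..U-1}"
      show "real (N l) powr (- (2 * real n ^ 2 * real (U - l)) / (real k - real n * real (U - l))) =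
            real (N l) powr (- (2 * real n * real (U - l)) / real l)"
        using expeq[OF kU l] by (simp add: minus_divide_left[symmetric])
    qed
    have e2: "(\<Sum>l\<in>{1..U-1}. (2 * real n ^ 2 * real (U - l)) / (real k - real n * real (U - l)))
        = (\<Sum>l\<in>{1..U-1}. (2 * real n * real (U - l)) / real l)"
      using expeq[OF kU] by (intro sum.cong refl) auto
    show "(\<forall>N :: nat \<Rightarrow> nat. (\<forall>j\<in>{1..U}. N j \<ge> 1) \<longrightarrow>
           decay U n k B N \<le> K * (\<Prod>l\<in>{1..U-1}.
              real (N l) powr (- (2 * real n * real (U - l)) / real l)))
        \<and> (\<forall>N :: nat. N \<ge> 1 \<longrightarrow>
           decay U n k B (\<lambda>_. N) \<le> K / real N powr
              (\<Sum>l\<in>{1..U-1}. (2 * real n * real (U - l)) / real l))"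
      using P1 P2 unfolding e1 e2 by blast
  qed
  show ?thesis using Kpos P1 P2 P34 by blast
qed


end
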